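(* Assume conditions (i), (ii) and (iv) of Assumption A. Then the stationary distribution $\pi$ and the measure $x^3\pi(dx)$ both have bounded Lebesgue densities on $\mathbb{R}$ (and in particular $x^2\pi(dx)$ has a bounded Lebesgue density as well).
   Context: Model: Let $\lambda>0$. Let $J_t=\sum_{j=1}^{N_t}U_j$ be a compound Poisson process with Poisson intensity $\alpha>0$ and i.i.d. positive jumps with distribution $F$; its Lévy measure is $\nu=\alpha F$. $X$ is the stationary solution of $dX_t=-\lambda X_tdt+dJ_{\lambda t}$, with stationary distribution $\pi$ having characteristic function $\varphi(t)=\exp\big(\int_0^\infty(e^{itx}-1)\frac{k(x)}{x}dx\big)$, where $k(x)=\nu((x,\infty))$ for $x\ge0$ and $k(x)=0$ for $x<0$. $\varphi_k(u)=\int_0^\infty e^{iux}k(x)dx$. Conditions: (i) $\int_0^\infty(1\vee|x|^{2+\epsilon})k(x)dx<\infty$ for some $\epsilon>0$. (ii) $k(0)=\alpha$ with $2<\alpha<\infty$. (iv) $|\varphi_k(u)|\lesssim(1+|u|)^{-1}$ and $|\varphi_k'(u)|\vee|\varphi_k''(u)|\lesssim(1+|u|)^{-2}$. *)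

theory Defs
  imports "HOL-Probability.Probability"
begin

text \<open>Tail function of the Levy measure nu = alpha F:
  k(x) = nu((x,infinity)) for x >= 0 and k(x) = 0 for x < 0.\<close>
definition tailk :: "real \<Rightarrow> real measure \<Rightarrow> real \<Rightarrow> real" where
  "tailk \<alpha> F x = (if 0 \<le> x then \<alpha> * measure F {x<..} else 0)"

definition phik :: "real \<Rightarrow> real measure \<Rightarrow> real \<Rightarrow> complex" where
  "phik \<alpha> F u = set_lebesgue_integral lborel {0..}
      (\<lambda>x. iexp (u * x) * complex_of_real (tailk \<alpha> F x))"

definition phipi :: "real \<Rightarrow> real measure \<Rightarrow> real \<Rightarrow> complex" where
  "phipi \<alpha> F t = exp (set_lebesgue_integral lborel {0<..}
      (\<lambda>x. (iexp (t * x) - 1) * complex_of_real (tailk \<alpha> F x / x)))"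

end

theory Submission
  imports Defs
begin

lemma iexp_diff_bound: "cmod (iexp a - iexp b) \<le> \<bar>a - b\<bar>"
proof -
  have "iexp a - iexp b = iexp b * (iexp (a - b) - 1)"
    by (simp add: algebra_simps flip: exp_add)
  then have "cmod (iexp a - iexp b) = cmod (iexp (a - b) - 1)"
    by (simp add: norm_mult)
  also have "\<dots> \<le> \<bar>a - b\<bar>" using iexp_approx1[of "a-b" 0] by simp
  finally show ?thesis .
qed

lemma vd_iff_quot:
  fixes f :: "real \<Rightarrow> 'a::real_normed_vector"
  shows "(f has_vector_derivative D) (at x) \<longleftrightarrow> ((\<lambda>y. (f y - f x) /\<^sub>R (y - x)) \<longlongrightarrow> D) (at x)"
proof -
  have e: "norm ((f y - f x) /\<^sub>R (y - x) - D) = norm ((1 / norm (y - x)) *\<^sub>R (f y - (f x + (y - x) *\<^sub>R D)))"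
    if "y \<noteq> x" for y
  proof -
    have "(1 / (y - x)) *\<^sub>R ((y - x) *\<^sub>R D) = D" using that by simp
    then have "(f y - f x) /\<^sub>R (y - x) - D = (1 / (y - x)) *\<^sub>R (f y - (f x + (y - x) *\<^sub>R D))"
      by (simp add: scaleR_diff_right scaleR_add_right divide_inverse diff_diff_eq)
    then show ?thesis using that by (simp add: abs_divide)
  qed
  have "((\<lambda>y. (f y - f x) /\<^sub>R (y - x)) \<longlongrightarrow> D) (at x) \<longleftrightarrow> ((\<lambda>y. (f y - f x) /\<^sub>R (y - x) - D) \<longlongrightarrow> 0) (at x)"
    by (simp add: LIM_zero_iff)
  also have "\<dots> \<longleftrightarrow> ((\<lambda>y. norm ((f y - f x) /\<^sub>R (y - x) - D)) \<longlongrightarrow> 0) (at x)"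
    by (simp add: tendsto_norm_zero_iff)
  also have "\<dots> \<longleftrightarrow> ((\<lambda>y. norm ((1 / norm (y - x)) *\<^sub>R (f y - (f x + (y - x) *\<^sub>R D)))) \<longlongrightarrow> 0) (at x)"
    by (intro filterlim_cong refl) (auto simp: eventually_at_filter e)
  also have "\<dots> \<longleftrightarrow> ((\<lambda>y. (1 / norm (y - x)) *\<^sub>R (f y - (f x + (y - x) *\<^sub>R D))) \<longlongrightarrow> 0) (at x)"
    by (rule tendsto_norm_zero_iff)
  finally show ?thesis
    unfolding has_vector_derivative_def has_derivative_within
    using bounded_linear_scaleR_left by auto
qed

lemma deriv_iexp_int:
  fixes w :: "real \<Rightarrow> real" and c :: complex
  assumes wm: "w \<in> borel_measurable borel"
    and int: "\<And>t. integrable lborel (\<lambda>x. (iexp (t*x) - c) * of_real (w x))"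
    and int1: "integrable lborel (\<lambda>x. x * w x)"
  shows "((\<lambda>t. \<integral>x. (iexp (t*x) - c) * of_real (w x) \<partial>lborel) has_vector_derivative
           (\<integral>x. \<i> * iexp (t*x) * of_real (x * w x) \<partial>lborel)) (at t)"
proof -
  let ?I = "\<lambda>t. \<integral>x. (iexp (t*x) - c) * of_real (w x) \<partial>lborel"
  have pd: "((\<lambda>s. (iexp (s*x) - iexp (t*x)) / of_real (s - t)) \<longlongrightarrow> \<i> * iexp (t*x) * of_real x) (at t)" for x
  proof -
    have "((\<lambda>s::complex. exp (\<i> * (s * of_real x))) has_field_derivative (\<i> * iexp (t*x) * of_real x)) (at (of_real t))"
      by (auto intro!: derivative_eq_intros simp: algebra_simps)
    from has_vector_derivative_real_field[OF this]
    have "((\<lambda>s. iexp (s*x)) has_vector_derivative (\<i> * iexp (t*x) * of_real x)) (at t)"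
      by simp
    then show ?thesis unfolding vd_iff_quot
      by (simp add: scaleR_conv_of_real divide_inverse mult.commute)
  qed
  show ?thesis
    unfolding vd_iff_quot
  proof (subst tendsto_at_iff_sequentially, intro allI impI)
    fix X :: "nat \<Rightarrow> real"
    assume X: "\<forall>i. X i \<in> UNIV - {t}" and Xt: "X \<longlonglongrightarrow> t"
    have eq: "(?I (X n) - ?I t) /\<^sub>R (X n - t) =
       (\<integral>x. ((iexp (X n*x) - iexp (t*x)) / of_real (X n - t)) * of_real (w x) \<partial>lborel)" for n
    proof -
      have "?I (X n) - ?I t = (\<integral>x. (iexp (X n*x) - c) * of_real (w x) - (iexp (t*x) - c) * of_real (w x) \<partial>lborel)"
        using int by (simp add: Bochner_Integration.integral_diff)
      also have "\<dots> = (\<integral>x. (iexp (X n*x) - iexp (t*x)) * of_real (w x) \<partial>lborel)"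
        by (intro Bochner_Integration.integral_cong) (auto simp: algebra_simps)
      finally have "(?I (X n) - ?I t) /\<^sub>R (X n - t) = (\<integral>x. (iexp (X n*x) - iexp (t*x)) * of_real (w x) \<partial>lborel) /\<^sub>R (X n - t)"
        by simp
      also have "\<dots> = (\<integral>x. ((iexp (X n*x) - iexp (t*x)) * of_real (w x)) /\<^sub>R (X n - t) \<partial>lborel)"
        by (simp add: integral_scaleR_right)
      also have "\<dots> = (\<integral>x. ((iexp (X n*x) - iexp (t*x)) / of_real (X n - t)) * of_real (w x) \<partial>lborel)"
        by (intro Bochner_Integration.integral_cong) (auto simp: scaleR_conv_of_real divide_inverse ac_simps)
      finally show ?thesis .
    qed
    have "(\<lambda>n. \<integral>x. ((iexp (X n*x) - iexp (t*x)) / of_real (X n - t)) * of_real (w x) \<partial>lborel)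
           \<longlonglongrightarrow> (\<integral>x. \<i> * iexp (t*x) * of_real (x * w x) \<partial>lborel)"
    proof (rule integral_dominated_convergence[where w="\<lambda>x. \<bar>x * w x\<bar>"])
      show "integrable lborel (\<lambda>x. \<bar>x * w x\<bar>)" using int1 by auto
      show "(\<lambda>x. \<i> * iexp (t*x) * of_real (x * w x)) \<in> borel_measurable lborel"
        using wm by auto
      show "(\<lambda>x. ((iexp (X n*x) - iexp (t*x)) / of_real (X n - t)) * of_real (w x)) \<in> borel_measurable lborel" for n
        using wm by auto
      show "AE x in lborel. (\<lambda>n. ((iexp (X n*x) - iexp (t*x)) / of_real (X n - t)) * of_real (w x))
             \<longlonglongrightarrow> \<i> * iexp (t*x) * of_real (x * w x)"
      proof (intro AE_I2)
        fix x
        have L: "(\<lambda>n. (iexp (X n*x) - iexp (t*x)) / of_real (X n - t)) \<longlonglongrightarrow> \<i> * iexp (t*x) * of_real x"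
          using pd[of x] X Xt unfolding tendsto_at_iff_sequentially by (auto simp: o_def)
        show "(\<lambda>n. ((iexp (X n*x) - iexp (t*x)) / of_real (X n - t)) * of_real (w x))
             \<longlonglongrightarrow> \<i> * iexp (t*x) * of_real (x * w x)"
          using tendsto_mult_right[OF L, of "of_real (w x)"] by (simp add: mult.assoc)
      qed
      show "AE x in lborel. norm (((iexp (X n*x) - iexp (t*x)) / of_real (X n - t)) * of_real (w x)) \<le> \<bar>x * w x\<bar>" for n
      proof (intro AE_I2)
        fix x
        have ne: "X n - t \<noteq> 0" using X by auto
        have "cmod (iexp (X n*x) - iexp (t*x)) \<le> \<bar>X n - t\<bar> * \<bar>x\<bar>"
          using iexp_diff_bound[of "X n * x" "t*x"] by (simp add: abs_mult flip: left_diff_distrib)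
        then have "cmod ((iexp (X n*x) - iexp (t*x)) / of_real (X n - t)) \<le> \<bar>x\<bar>"
          using ne by (simp add: norm_divide divide_le_eq mult.commute del: of_real_diff add: of_real_diff[symmetric])
        then show "norm (((iexp (X n*x) - iexp (t*x)) / of_real (X n - t)) * of_real (w x)) \<le> \<bar>x * w x\<bar>"
          unfolding norm_mult abs_mult norm_of_real by (intro mult_right_mono) auto
      qed
    qed
    then show "((\<lambda>y. (?I y - ?I t) /\<^sub>R (y - t)) \<circ> X) \<longlonglongrightarrow> (\<integral>x. \<i> * iexp (t*x) * of_real (x * w x) \<partial>lborel)"
      by (simp only: o_def eq)
  qed
qed


lemma cont_kernel_int:
  fixes g :: "real \<Rightarrow> complex" and k :: "real \<Rightarrow> real \<Rightarrow> complex"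
  assumes g: "integrable lborel g"
    and kc: "\<And>s. continuous_on UNIV (\<lambda>x. k x s)"
    and km: "\<And>x. (\<lambda>s. k x s) \<in> borel_measurable borel"
    and kb: "\<And>x s. cmod (k x s) \<le> 1"
  shows "continuous_on UNIV (\<lambda>x. \<integral>s. k x s * g s \<partial>lborel)"
proof (intro continuous_at_imp_continuous_on ballI)
  fix x0 :: real
  show "isCont (\<lambda>x. \<integral>s. k x s * g s \<partial>lborel) x0"
    unfolding continuous_at_sequentially
  proof (intro allI impI)
    fix X :: "nat \<Rightarrow> real" assume X: "X \<longlonglongrightarrow> x0"
    have "(\<lambda>n. \<integral>s. k (X n) s * g s \<partial>lborel) \<longlonglongrightarrow> (\<integral>s. k x0 s * g s \<partial>lborel)"
    proof (rule integral_dominated_convergence[where w="\<lambda>s. norm (g s)"])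
      show "integrable lborel (\<lambda>s. norm (g s))" using g by auto
      show "(\<lambda>s. k x0 s * g s) \<in> borel_measurable lborel" using g km by auto
      show "(\<lambda>s. k (X n) s * g s) \<in> borel_measurable lborel" for n using g km by auto
      show "AE s in lborel. (\<lambda>n. k (X n) s * g s) \<longlonglongrightarrow> k x0 s * g s"
      proof (intro AE_I2)
        fix s
        have "isCont (\<lambda>x. k x s) x0" using kc[of s] by (simp add: continuous_on_eq_continuous_at)
        then have "(\<lambda>n. k (X n) s) \<longlonglongrightarrow> k x0 s"
          using X unfolding continuous_at_sequentially by (auto simp: o_def)
        then show "(\<lambda>n. k (X n) s * g s) \<longlonglongrightarrow> k x0 s * g s"
          by (intro tendsto_mult tendsto_const)
      qed
      show "AE s in lborel. norm (k (X n) s * g s) \<le> norm (g s)" for n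
        using kb by (intro AE_I2) (auto simp: norm_mult intro: mult_left_le_one_le)
    qed
    then show "((\<lambda>x. \<integral>s. k x s * g s \<partial>lborel) \<circ> X) \<longlonglongrightarrow> (\<integral>s. k x0 s * g s \<partial>lborel)"
      by (simp add: o_def)
  qed
qed

lemma CLBINT_sym_limit:
  fixes g :: "real \<Rightarrow> complex"
  assumes g: "integrable lborel g"
  shows "(\<lambda>T. CLBINT t=-T..T. g t) \<longlonglongrightarrow> (CLBINT t. g t)"
proof -
  have eq: "(CLBINT t=-T..T. g t) = (CLBINT t. indicator {-real T<..<real T} t *\<^sub>R g t)" for T :: nat
  proof -
    have "einterval (- ereal (real T)) (ereal (real T)) = {-real T<..<real T}"
      by (auto simp: einterval_def)
    then show ?thesis
      by (simp add: interval_lebesgue_integral_def set_lebesgue_integral_def)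
  qed
  have "(\<lambda>T::nat. CLBINT t. indicator {-real T<..<real T} t *\<^sub>R g t) \<longlonglongrightarrow> (CLBINT t. g t)"
  proof (rule integral_dominated_convergence[where w="\<lambda>s. norm (g s)"])
    show "integrable lborel (\<lambda>s. norm (g s))" using g by auto
    show "g \<in> borel_measurable lborel" using g by auto
    show "(\<lambda>t. indicator {-real T<..<real T} t *\<^sub>R g t) \<in> borel_measurable lborel" for T
      using g by auto
    show "AE t in lborel. (\<lambda>T. indicator {-real T<..<real T} t *\<^sub>R g t) \<longlonglongrightarrow> g t"
    proof (intro AE_I2)
      fix t :: real
      obtain N :: nat where N: "\<bar>t\<bar> < real N" using reals_Archimedean2 by blast
      have "eventually (\<lambda>T. indicator {-real T<..<real T} t *\<^sub>R g t = g t) sequentially"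
        unfolding eventually_sequentially
        using N by (intro exI[of _ N]) (auto simp: indicator_def)
      then show "(\<lambda>T. indicator {-real T<..<real T} t *\<^sub>R g t) \<longlonglongrightarrow> g t"
        by (rule tendsto_eventually)
    qed
    show "AE t in lborel. norm (indicator {-real T<..<real T} t *\<^sub>R g t) \<le> norm (g t)" for T
      by (intro AE_I2) (auto simp: indicator_def)
  qed
  then show ?thesis using eq by simp
qed


lemma vd_iexp_lin:
  "((\<lambda>x. iexp (-(t*x)) * c) has_vector_derivative (- (\<i> * of_real t) * iexp (-(t*x)) * c)) (at x within S)"
proof -
  have "((\<lambda>z. exp (\<i> * (- (of_real t * z))) * c) has_field_derivative (- (\<i> * of_real t) * exp (\<i> * (- (of_real t * of_real x))) * c)) (at (of_real x))"
    by (auto intro!: derivative_eq_intros simp: algebra_simps)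
  from has_vector_derivative_real_field[OF this]
  show ?thesis by (simp add: has_vector_derivative_at_within)
qed

lemma int_iexp_mult:
  fixes g :: "real \<Rightarrow> complex" and h :: "real \<Rightarrow> real"
  assumes g: "integrable lborel g" and h: "h \<in> borel_measurable borel"
  shows "integrable lborel (\<lambda>t. iexp (h t) * g t)"
proof (rule Bochner_Integration.integrable_bound[OF g])
  show "(\<lambda>t. iexp (h t) * g t) \<in> borel_measurable lborel" using g h by auto
  show "AE t in lborel. norm (iexp (h t) * g t) \<le> norm (g t)"
    by (intro AE_I2) (simp add: norm_mult)
qed

lemma G_as_integral:
  fixes a b t :: real and c :: complex
  assumes "a \<le> b" "t \<noteq> 0"
  shows "(iexp (-(t*a)) - iexp (-(t*b))) / (\<i> * t) * c = (\<integral>x. indicator {a..b} x *\<^sub>R (iexp (-(t*x)) * c) \<partial>lborel)"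
proof -
  let ?F = "\<lambda>x. iexp (-(t*x)) * c / (- (\<i> * of_real t))"
  have "(\<integral>x. indicator {a..b} x *\<^sub>R (iexp (-(t*x)) * c) \<partial>lborel) = ?F b - ?F a"
  proof (rule integral_FTC_atLeastAtMost[OF assms(1)])
    fix x
    have "((\<lambda>x. iexp (-(t*x)) * (c / (- (\<i> * of_real t)))) has_vector_derivative (- (\<i> * of_real t) * iexp (-(t*x)) * (c / (- (\<i> * of_real t))))) (at x within {a..b})"
      by (rule vd_iexp_lin)
    then show "(?F has_vector_derivative iexp (-(t*x)) * c) (at x within {a..b})"
      using assms(2) by (simp add: field_simps)
  next
    show "continuous_on {a..b} (\<lambda>x. iexp (-(t*x)) * c)"
      by (intro continuous_intros)
  qed
  also have "\<dots> = (iexp (-(t*a)) - iexp (-(t*b))) / (\<i> * t) * c"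
    using assms(2) by (simp add: field_simps)
  finally show ?thesis ..
qed

lemma inv_interval:
  fixes M :: "real measure" and a b :: real
  assumes rd: "real_distribution M" and int: "integrable lborel (char M)"
    and ab: "a \<le> b" and na: "measure M {a} = 0" and nb: "measure M {b} = 0"
  shows "measure M {a<..b} = (\<integral>x. indicator {a..b} x * (Re (\<integral>t. iexp (-(t*x)) * char M t \<partial>lborel) / (2*pi)) \<partial>lborel)"
proof -
  interpret real_distribution M by (rule rd)
  define G where "G t = (iexp (-(t*a)) - iexp (-(t*b))) / (\<i> * t)" for t
  have Gb: "cmod (G t) \<le> b - a" for t
  proof (cases "t = 0")
    case True then show ?thesis using ab by (simp add: G_def)
  next
    case False
    then show ?thesis using Levy_Inversion_aux2[of "-b" "-a" t] ab by (simp add: G_def mult.commute)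
  qed
  have Gm: "G \<in> borel_measurable borel" unfolding G_def by measurable
  have intG: "integrable lborel (\<lambda>t. G t * char M t)"
  proof (rule Bochner_Integration.integrable_bound[of _ "\<lambda>t. of_real (b - a) * char M t"])
    show "integrable lborel (\<lambda>t. of_real (b - a) * char M t)" using int by auto
    show "(\<lambda>t. G t * char M t) \<in> borel_measurable lborel" using Gm by auto
    show "AE t in lborel. norm (G t * char M t) \<le> norm (of_real (b - a) * char M t)"
      using Gb ab by (intro AE_I2) (auto simp del: of_real_diff simp: norm_mult intro!: mult_right_mono)
  qed
  note L1 = Levy_Inversion[OF ab na nb]
  have em: "ereal (real_of_int (- int T)) = - ereal (real T)" for T :: nat by simp
  have L2: "(\<lambda>T::nat. c * (CLBINT t=ereal (real_of_int (- int T))..ereal (real T). G t * char M t)) \<longlonglongrightarrow> c * (CLBINT t. G t * char M t)" for c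
    unfolding em by (intro tendsto_mult_left CLBINT_sym_limit intG)
  have E1: "complex_of_real (measure M {a<..b}) = 1 / (2 * pi) * (CLBINT t. G t * char M t)"
    using LIMSEQ_unique[OF L1 L2[unfolded G_def]] unfolding G_def by simp
  define h where "h x t = indicator {a..b} x *\<^sub>R (iexp (-(t*x)) * char M t)" for x t
  have E2: "(CLBINT t. G t * char M t) = (CLBINT t. (CLBINT x. h x t))"
  proof (rule integral_cong_AE)
    show "(\<lambda>t. G t * char M t) \<in> borel_measurable lborel" using Gm by auto
    show "(\<lambda>t. CLBINT x. h x t) \<in> borel_measurable lborel"
      unfolding h_def by measurable
    show "AE t in lborel. G t * char M t = (CLBINT x. h x t)"
      using AE_lborel_singleton[of 0]
      by eventually_elim (unfold G_def h_def, erule G_as_integral[OF ab])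
  qed
  have hm: "(\<lambda>(x, t). h x t) \<in> borel_measurable (lborel \<Otimes>\<^sub>M lborel)"
    unfolding h_def by measurable
  have nh: "norm (h x t) = indicator {a..b} x * norm (char M t)" for x t
    by (simp add: h_def norm_mult indicator_def)
  have inth: "integrable (lborel \<Otimes>\<^sub>M lborel) (\<lambda>(x, t). h x t)"
  proof (rule lborel_pair.Fubini_integrable[OF hm])
    show "integrable lborel (\<lambda>x. \<integral>t. norm (case (x, t) of (x, t) \<Rightarrow> h x t) \<partial>lborel)"
      by (simp add: nh emeasure_lborel_Icc_eq)
    show "AE x in lborel. integrable lborel (\<lambda>t. case (x, t) of (x, t) \<Rightarrow> h x t)"
    proof (intro AE_I2)
      fix x
      show "integrable lborel (\<lambda>t. case (x, t) of (x, t) \<Rightarrow> h x t)"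
        unfolding h_def using int_iexp_mult[OF int, of "\<lambda>t. -(t*x)"] by (auto intro!: integrable_scaleR_right)
    qed
  qed
  have E3: "(CLBINT t. (CLBINT x. h x t)) = (CLBINT x. (CLBINT t. h x t))"
    by (rule lborel_pair.Fubini_integral[OF inth])
  define H where "H x = (CLBINT t. iexp (-(t*x)) * char M t)" for x
  have E4: "(CLBINT t. h x t) = indicator {a..b} x *\<^sub>R H x" for x
    by (simp add: h_def H_def)
  have Hb: "norm (H x) \<le> (\<integral>t. norm (char M t) \<partial>lborel)" for x
    unfolding H_def
    by (rule order.trans[OF integral_norm_bound]) (simp add: norm_mult)
  have Hc: "continuous_on UNIV H"
    unfolding H_def
    by (rule cont_kernel_int[OF int]) (auto intro!: continuous_intros simp: norm_mult)
  have intH: "integrable lborel (\<lambda>x. indicator {a..b} x *\<^sub>R H x)"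
  proof (rule Bochner_Integration.integrable_bound[of _ "\<lambda>x. indicator {a..b} x * (\<integral>t. norm (char M t) \<partial>lborel)"])
    show "integrable lborel (\<lambda>x. indicator {a..b} x * (\<integral>t. norm (char M t) \<partial>lborel))" by (simp add: emeasure_lborel_Icc_eq)
    show "(\<lambda>x. indicator {a..b} x *\<^sub>R H x) \<in> borel_measurable lborel"
      using borel_measurable_continuous_onI[OF Hc] by auto
    show "AE x in lborel. norm (indicator {a..b} x *\<^sub>R H x) \<le> norm (indicator {a..b} x * (\<integral>t. norm (char M t) \<partial>lborel))"
      using Hb by (intro AE_I2) (auto simp: indicator_def integral_nonneg_AE)
  qed
  have "complex_of_real (measure M {a<..b}) = 1 / (2 * pi) * (CLBINT x. indicator {a..b} x *\<^sub>R H x)"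
    using E1 E2 E3 E4 by simp
  then have "measure M {a<..b} = Re (1 / (2 * pi) * (CLBINT x. indicator {a..b} x *\<^sub>R H x))"
    by (metis Re_complex_of_real)
  also have "\<dots> = Re (CLBINT x. indicator {a..b} x *\<^sub>R H x) / (2 * pi)"
    by simp
  also have "Re (CLBINT x. indicator {a..b} x *\<^sub>R H x) = (\<integral>x. Re (indicator {a..b} x *\<^sub>R H x) \<partial>lborel)"
    by (rule integral_bounded_linear[OF bounded_linear_Re intH, symmetric])
  also have "\<dots> / (2 * pi) = (\<integral>x. indicator {a..b} x * (Re (H x) / (2*pi)) \<partial>lborel)"
    by simp
  finally show ?thesis unfolding H_def .
qed


lemma fourier_density:
  fixes M :: "real measure"
  assumes rd: "real_distribution M" and int: "integrable lborel (char M)"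
  defines "f \<equiv> \<lambda>x. Re (\<integral>t. iexp (-(t*x)) * char M t \<partial>lborel) / (2*pi)"
  shows "M = density lborel (\<lambda>x. ennreal (f x))" "\<forall>x. 0 \<le> f x" "continuous_on UNIV f"
    "\<forall>x. \<bar>f x\<bar> \<le> (\<integral>t. norm (char M t) \<partial>lborel) / (2*pi)"
proof -
  interpret real_distribution M by (rule rd)
  define B where "B = (\<integral>t. norm (char M t) \<partial>lborel) / (2*pi)"
  have B0: "0 \<le> B" unfolding B_def by (simp add: integral_nonneg_AE)
  define H where "H x = (CLBINT t. iexp (-(t*x)) * char M t)" for x
  have Hc: "continuous_on UNIV H"
    unfolding H_def
    by (rule cont_kernel_int[OF int]) (auto intro!: continuous_intros simp: norm_mult)
  have fH: "f x = Re (H x) / (2*pi)" for x by (simp add: f_def H_def)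
  have fc: "continuous_on UNIV f"
    unfolding fH[abs_def] by (intro continuous_intros Hc) auto
  then show "continuous_on UNIV f" .
  have fm: "f \<in> borel_measurable borel" using fc by (rule borel_measurable_continuous_onI)
  have fb: "\<bar>f x\<bar> \<le> B" for x
  proof -
    have "norm (H x) \<le> (\<integral>t. norm (char M t) \<partial>lborel)"
      unfolding H_def
      by (rule order.trans[OF integral_norm_bound]) (simp add: norm_mult)
    then have "\<bar>Re (H x)\<bar> \<le> (\<integral>t. norm (char M t) \<partial>lborel)"
      using abs_Re_le_cmod order.trans by blast
    then show ?thesis unfolding fH B_def by (simp add: divide_right_mono)
  qed
  then show "\<forall>x. \<bar>f x\<bar> \<le> (\<integral>t. norm (char M t) \<partial>lborel) / (2*pi)" unfolding B_def by blast
  have intf: "integrable lborel (\<lambda>x. indicator {a..b} x * f x)" for a b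
  proof (rule Bochner_Integration.integrable_bound[of _ "\<lambda>x. indicator {a..b} x * B"])
    show "integrable lborel (\<lambda>x. indicator {a..b} x * B)" by (simp add: emeasure_lborel_Icc_eq)
    show "(\<lambda>x. indicator {a..b} x * f x) \<in> borel_measurable lborel" using fm by auto
    show "AE x in lborel. norm (indicator {a..b} x * f x) \<le> norm (indicator {a..b} x * B)"
      using fb B0 by (intro AE_I2) (auto simp: indicator_def)
  qed
  have intc: "(\<integral>x. indicator {a..b} x * c \<partial>lborel) = c * (b - a)" if "a \<le> b" for a b c :: real
    using that by (simp add: mult.commute)
  have upper: "(\<integral>x. indicator {a..b} x * f x \<partial>lborel) \<le> c * (b - a)"
    if ab: "a \<le> b" and fc: "\<And>y. a \<le> y \<Longrightarrow> y \<le> b \<Longrightarrow> f y \<le> c" for a b c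
  proof -
    have "(\<integral>x. indicator {a..b} x * f x \<partial>lborel) \<le> (\<integral>x. indicator {a..b} x * c \<partial>lborel)"
    proof (rule integral_mono)
      show "integrable lborel (\<lambda>x. indicator {a..b} x * c)" by (simp add: emeasure_lborel_Icc_eq)
      show "integrable lborel (\<lambda>x. indicator {a..b} x * f x)" by (rule intf)
      show "indicator {a..b} x * f x \<le> indicator {a..b} x * c" for x
        using fc by (auto simp: indicator_def)
    qed
    then show ?thesis using intc[OF ab, of c] ab by (simp add: mult.commute)
  qed
  define A where "A = {x. measure M {x} \<noteq> 0}"
  have cA: "countable A" unfolding A_def by (rule countable_support)
  have pick: "\<exists>x\<in>{u<..<v}. x \<notin> A" if "u < v" for u v
    using open_minus_countable[OF cA, of "{u<..<v}"] that by auto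
  have key: "measure M {a<..b} = (\<integral>x. indicator {a..b} x * f x \<partial>lborel)"
    if "a \<le> b" "a \<notin> A" "b \<notin> A" for a b
    using inv_interval[OF rd int that(1)] that unfolding A_def f_def by auto
  have fpos: "0 \<le> f x0" for x0
  proof (rule ccontr)
    assume neg: "\<not> 0 \<le> f x0"
    have "isCont f x0" using fc by (simp add: continuous_on_eq_continuous_at)
    then have "eventually (\<lambda>y. f y < f x0 / 2) (at x0)"
      using neg by (intro order_tendstoD(2)) (auto simp: isCont_def)
    then obtain d where d: "d > 0" "\<And>y. y \<noteq> x0 \<Longrightarrow> dist y x0 < d \<Longrightarrow> f y < f x0 / 2"
      unfolding eventually_at by blast
    have d': "f y < f x0 / 2" if "dist y x0 < d" for y
      using d(2)[of y] that neg by (cases "y = x0") auto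
    obtain a where a: "a \<in> {x0 - d<..<x0}" "a \<notin> A" using pick[of "x0 - d" x0] d by auto
    obtain b where b: "b \<in> {x0<..<x0 + d}" "b \<notin> A" using pick[of x0 "x0 + d"] d by auto
    have ab: "a \<le> b" using a b by auto
    have "measure M {a<..b} \<le> f x0 / 2 * (b - a)"
      unfolding key[OF ab a(2) b(2)]
    proof (rule upper[OF ab])
      fix y assume "a \<le> y" "y \<le> b"
      then have "dist y x0 < d" using a b by (auto simp: dist_real_def)
      then show "f y \<le> f x0 / 2" using d' by (simp add: less_imp_le)
    qed
    also have "\<dots> < 0" using a b neg by (intro mult_neg_pos) auto
    finally show False by simp
  qed
  then show "\<forall>x. 0 \<le> f x" by blast
  have noatom: "measure M {x} = 0" for x
  proof (rule ccontr)
    assume "measure M {x} \<noteq> 0"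
    then have m: "measure M {x} > 0" using measure_nonneg[of M "{x}"] by linarith
    define e where "e = measure M {x} / (4 * (B + 1))"
    have e: "e > 0" using m B0 by (simp add: e_def)
    obtain a where a: "a \<in> {x - e<..<x}" "a \<notin> A" using pick[of "x - e" x] e by auto
    obtain b where b: "b \<in> {x<..<x + e}" "b \<notin> A" using pick[of x "x + e"] e by auto
    have ab: "a \<le> b" using a b by auto
    have "measure M {x} \<le> measure M {a<..b}"
      using a b by (intro finite_measure_mono) auto
    also have "\<dots> \<le> B * (b - a)"
      unfolding key[OF ab a(2) b(2)]
      by (rule upper[OF ab]) (use fb in \<open>auto simp: abs_le_iff\<close>)
    also have "\<dots> \<le> (B + 1) * (2 * e)"
      using a b B0 by (intro mult_mono) auto
    also have "\<dots> = measure M {x} / 2"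
      using B0 by (simp add: e_def field_simps)
    finally show False using m by simp
  qed
  have key2: "measure M {a<..b} = (\<integral>x. indicator {a..b} x * f x \<partial>lborel)" if "a \<le> b" for a b
    using key[OF that] noatom unfolding A_def by auto
  let ?D = "density lborel (\<lambda>x. ennreal (f x))"
  have eqI: "emeasure M {a<..b} = emeasure ?D {a<..b}" for a b
  proof (cases "a \<le> b")
    case False then show ?thesis by simp
  next
    case True
    have "emeasure ?D {a<..b} = (\<integral>\<^sup>+ x. ennreal (f x) * indicator {a<..b} x \<partial>lborel)"
      using fm by (subst emeasure_density) auto
    also have "\<dots> = (\<integral>\<^sup>+ x. ennreal (indicator {a..b} x * f x) \<partial>lborel)"
    proof (rule nn_integral_cong_AE)
      show "AE x in lborel. ennreal (f x) * indicator {a<..b} x = ennreal (indicator {a..b} x * f x)"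
        using AE_lborel_singleton[of a] by eventually_elim (auto simp: indicator_def)
    qed
    also have "\<dots> = ennreal (\<integral>x. indicator {a..b} x * f x \<partial>lborel)"
      by (rule nn_integral_eq_integral[OF intf]) (use fpos in \<open>auto intro!: AE_I2\<close>)
    also have "\<dots> = emeasure M {a<..b}"
      using key2[OF True] by (simp add: emeasure_eq_measure)
    finally show ?thesis ..
  qed
  have SB: "sets borel = sigma_sets UNIV (range (\<lambda>(a, b). {a<..b::real}))"
    by (subst borel_sigma_sets_Ioc) (simp add: sets_measure_of)
  show "M = ?D"
  proof (rule measure_eqI_generator_eq[where \<Omega>=UNIV and E="range (\<lambda>(a, b). {a<..b::real})" and A="\<lambda>i. {- real i<..real i}"])
    show "Int_stable (range (\<lambda>(a, b). {a<..b::real}))"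
      by (auto simp: Int_stable_def)
    show "range (\<lambda>(a, b). {a<..b::real}) \<subseteq> Pow UNIV" by auto
    show "emeasure M X = emeasure ?D X" if "X \<in> range (\<lambda>(a, b). {a<..b::real})" for X
      using that eqI by auto
    show "sets M = sigma_sets UNIV (range (\<lambda>(a, b). {a<..b::real}))"
      using SB by (simp add: events_eq_borel)
    show "sets ?D = sigma_sets UNIV (range (\<lambda>(a, b). {a<..b::real}))"
      using SB by simp
    show "range (\<lambda>i. {- real i<..real i}) \<subseteq> range (\<lambda>(a, b). {a<..b::real})" by auto
    show "(\<Union>i. {- real i<..real i}) = UNIV" by (rule UN_Ioc_eq_UNIV)
    show "emeasure M {- real i<..real i} \<noteq> \<infinity>" for i by (simp add: emeasure_eq_measure)
  qed
qed


lemma int_inv_sq: "integrable lborel (\<lambda>t::real. B / (1 + t^2))"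
proof -
  have "set_integrable lborel (einterval (-\<infinity>) \<infinity>) (\<lambda>x::real. inverse (1 + x^2))"
    by (rule integrable_inverse_1_plus_square)
  then have "integrable lborel (\<lambda>x::real. inverse (1 + x^2))"
    by (simp add: set_integrable_def einterval_def)
  then have "integrable lborel (\<lambda>x::real. B * inverse (1 + x^2))" by simp
  then show ?thesis by (simp add: divide_inverse)
qed

lemma int_bound_sq:
  fixes h :: "real \<Rightarrow> complex"
  assumes "h \<in> borel_measurable borel" "\<And>t. norm (h t) \<le> B / (1 + t^2)"
  shows "integrable lborel h"
proof (rule Bochner_Integration.integrable_bound[OF int_inv_sq[of B]])
  show "h \<in> borel_measurable lborel" using assms by simp
  show "AE t in lborel. norm (h t) \<le> norm (B / (1 + t^2))"
  proof (intro AE_I2)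
    fix t :: real
    have "B / (1 + t^2) \<le> \<bar>B / (1 + t^2)\<bar>" by (rule abs_ge_self)
    then show "norm (h t) \<le> norm (B / (1 + t^2))" using assms(2)[of t] by simp
  qed
qed

lemma int_sym_limit2:
  fixes g :: "real \<Rightarrow> complex"
  assumes g: "integrable lborel g"
  shows "(\<lambda>n::nat. \<integral>t. indicator {-real n..real n} t *\<^sub>R g t \<partial>lborel) \<longlonglongrightarrow> (\<integral>t. g t \<partial>lborel)"
proof (rule integral_dominated_convergence[where w="\<lambda>s. norm (g s)"])
  show "integrable lborel (\<lambda>s. norm (g s))" using g by auto
  show "g \<in> borel_measurable lborel" using g by auto
  show "(\<lambda>t. indicator {-real T..real T} t *\<^sub>R g t) \<in> borel_measurable lborel" for T
    using g by auto
  show "AE t in lborel. (\<lambda>T. indicator {-real T..real T} t *\<^sub>R g t) \<longlonglongrightarrow> g t"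
  proof (intro AE_I2)
    fix t :: real
    obtain N :: nat where N: "\<bar>t\<bar> < real N" using reals_Archimedean2 by blast
    have "eventually (\<lambda>T. indicator {-real T..real T} t *\<^sub>R g t = g t) sequentially"
      unfolding eventually_sequentially
      using N by (intro exI[of _ N]) (auto simp: indicator_def)
    then show "(\<lambda>T. indicator {-real T..real T} t *\<^sub>R g t) \<longlonglongrightarrow> g t"
      by (rule tendsto_eventually)
  qed
  show "AE t in lborel. norm (indicator {-real T..real T} t *\<^sub>R g t) \<le> norm (g t)" for T
    by (intro AE_I2) (auto simp: indicator_def)
qed

lemma ibp_fourier:
  fixes h h' :: "real \<Rightarrow> complex" and x B :: real
  assumes hd: "\<And>t. (h has_vector_derivative h' t) (at t)"
    and h'c: "continuous_on UNIV h'"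
    and hb: "\<And>t. norm (h t) \<le> B / (1 + t^2)" and h'b: "\<And>t. norm (h' t) \<le> B / (1 + t^2)"
  shows "(\<integral>t. iexp (-(t*x)) * h' t \<partial>lborel) = \<i> * of_real x * (\<integral>t. iexp (-(t*x)) * h t \<partial>lborel)"
proof -
  have hc: "continuous_on UNIV h"
    using hd by (auto intro!: continuous_at_imp_continuous_on has_vector_derivative_continuous)
  have hm: "h \<in> borel_measurable borel" using hc by (rule borel_measurable_continuous_onI)
  have h'm: "h' \<in> borel_measurable borel" using h'c by (rule borel_measurable_continuous_onI)
  have ih: "integrable lborel h" by (rule int_bound_sq[OF hm hb])
  have ih': "integrable lborel h'" by (rule int_bound_sq[OF h'm h'b])
  define P where "P t = iexp (-(x*t)) * 1 * h t" for t
  define P' where "P' t = iexp (-(x*t)) * 1 * h' t + (- (\<i> * of_real x) * iexp (-(x*t)) * 1) * h t" for t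
  have Pd: "(P has_vector_derivative P' t) (at t within S)" for t S
    unfolding P_def P'_def
    by (rule has_vector_derivative_mult[OF vd_iexp_lin[of x 1] has_vector_derivative_at_within[OF hd]])
  have P'c: "continuous_on UNIV P'"
    unfolding P'_def by (intro continuous_intros hc h'c)
  have i1: "integrable lborel (\<lambda>t. iexp (-(x*t)) * h' t)"
    by (rule int_iexp_mult[OF ih']) measurable
  have i2: "integrable lborel (\<lambda>t. iexp (-(x*t)) * h t)"
    by (rule int_iexp_mult[OF ih]) measurable
  have iP': "integrable lborel P'"
    unfolding P'_def using i1 i2 by (auto simp: mult.assoc)
  have ftc: "(\<integral>t. indicator {-real n..real n} t *\<^sub>R P' t \<partial>lborel) = P (real n) - P (- real n)" for n :: nat
    by (rule integral_FTC_atLeastAtMost) (auto intro: Pd continuous_on_subset[OF P'c])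
  have L1: "(\<lambda>n::nat. P (real n) - P (- real n)) \<longlonglongrightarrow> (\<integral>t. P' t \<partial>lborel)"
    using int_sym_limit2[OF iP'] unfolding ftc .
  have L2: "(\<lambda>n::nat. P (real n) - P (- real n)) \<longlonglongrightarrow> 0"
  proof (rule Lim_null_comparison)
    have B0: "0 \<le> B" using hb[of 0] norm_ge_zero[of "h 0"] by (simp del: norm_ge_zero)
    show "\<forall>\<^sub>F n in sequentially. norm (P (real n) - P (- real n)) \<le> 2 * B * inverse (real (Suc n))"
    proof (intro always_eventually allI)
      fix n :: nat
      have nP: "norm (P s) \<le> B / (1 + s^2)" for s
        using hb[of s] by (simp add: P_def norm_mult)
      have "1 + real n \<le> 1 + (real n)^2"
        by (cases n) (auto simp: power2_eq_square)
      then have d: "B / (1 + (real n)^2) \<le> B * inverse (real (Suc n))"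
        using B0 by (simp add: divide_inverse le_imp_inverse_le mult_left_mono add.commute)
      have "norm (P (real n) - P (- real n)) \<le> norm (P (real n)) + norm (P (- real n))"
        by (rule norm_triangle_ineq4)
      also have "\<dots> \<le> B / (1 + (real n)^2) + B / (1 + (real n)^2)"
        using nP[of "real n"] nP[of "- real n"] by simp
      also have "\<dots> \<le> 2 * B * inverse (real (Suc n))" using d by simp
      finally show "norm (P (real n) - P (- real n)) \<le> 2 * B * inverse (real (Suc n))" .
    qed
    show "(\<lambda>n. 2 * B * inverse (real (Suc n))) \<longlonglongrightarrow> 0"
      by (intro tendsto_mult_right_zero LIMSEQ_inverse_real_of_nat)
  qed
  have "(\<integral>t. P' t \<partial>lborel) = 0" using LIMSEQ_unique[OF L1 L2] .
  moreover have "(\<integral>t. P' t \<partial>lborel) = (\<integral>t. iexp (-(x*t)) * h' t \<partial>lborel) - \<i> * of_real x * (\<integral>t. iexp (-(x*t)) * h t \<partial>lborel)"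
  proof -
    have "(\<integral>t. P' t \<partial>lborel) = (\<integral>t. iexp (-(x*t)) * h' t + (- (\<i> * of_real x)) * (iexp (-(x*t)) * h t) \<partial>lborel)"
      unfolding P'_def by (simp add: mult.assoc)
    also have "\<dots> = (\<integral>t. iexp (-(x*t)) * h' t \<partial>lborel) + (\<integral>t. (- (\<i> * of_real x)) * (iexp (-(x*t)) * h t) \<partial>lborel)"
      using i1 i2 by (intro Bochner_Integration.integral_add) auto
    also have "(\<integral>t. (- (\<i> * of_real x)) * (iexp (-(x*t)) * h t) \<partial>lborel) = (- (\<i> * of_real x)) * (\<integral>t. iexp (-(x*t)) * h t \<partial>lborel)"
      by (rule integral_mult_right_zero)
    finally show ?thesis by simp
  qed
  ultimately show ?thesis by (simp add: mult.commute)
qed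


locale LL =
  fixes \<alpha> \<epsilon> :: real and F :: "real measure"
  assumes F_prob: "prob_space F" and F_sets: "sets F = sets borel"
    and F_pos: "measure F {..0} = 0"
    and eps: "\<epsilon> > 0"
    and cond_i: "set_integrable lborel {0..}
                   (\<lambda>x. max 1 (\<bar>x\<bar> powr (2 + \<epsilon>)) * tailk \<alpha> F x)"
    and alpha: "2 < \<alpha>"
begin

abbreviation "K \<equiv> tailk \<alpha> F"

lemma K_neg: "x < 0 \<Longrightarrow> K x = 0"
  by (simp add: tailk_def)

lemma K_nonneg: "0 \<le> K x"
  using alpha by (simp add: tailk_def)

lemma K_le: "K x \<le> \<alpha>"
proof -
  interpret prob_space F by (rule F_prob)
  show ?thesis using alpha prob_le_1[of "{x<..}"]
    by (auto simp: tailk_def mult_le_cancel_left1)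
qed

definition W where "W x = max 1 (\<bar>x\<bar> powr (2 + \<epsilon>))" for x :: real

lemma W_ge1: "1 \<le> W x" by (simp add: W_def)

lemma W_meas: "W \<in> borel_measurable borel"
  unfolding W_def by measurable

lemma K_meas: "K \<in> borel_measurable borel"
proof -
  have m: "(\<lambda>x. indicator {0..} x *\<^sub>R (W x * K x)) \<in> borel_measurable lborel"
    using cond_i unfolding set_integrable_def W_def by auto
  have "K x = indicator {0..} x *\<^sub>R (W x * K x) / W x" for x
    using W_ge1[of x] K_neg[of x] by (auto simp: indicator_def)
  then have "K = (\<lambda>x. indicator {0..} x *\<^sub>R (W x * K x) / W x)" by auto
  also have "\<dots> \<in> borel_measurable borel"
  proof (rule borel_measurable_divide[OF _ W_meas])
    show "(\<lambda>x. indicator {0..} x *\<^sub>R (W x * K x)) \<in> borel_measurable borel"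
      using m by simp
  qed
  finally show ?thesis .
qed

lemma K_int_pow: "j \<le> 2 \<Longrightarrow> integrable lborel (\<lambda>x. x ^ j * K x)"
proof -
  assume j: "j \<le> 2"
  have iW: "integrable lborel (\<lambda>x. indicator {0..} x *\<^sub>R (W x * K x))"
    using cond_i unfolding set_integrable_def W_def by auto
  show ?thesis
  proof (rule Bochner_Integration.integrable_bound[OF iW])
    show "(\<lambda>x. x ^ j * K x) \<in> borel_measurable lborel" using K_meas by auto
    show "AE x in lborel. norm (x ^ j * K x) \<le> norm (indicator {0..} x *\<^sub>R (W x * K x))"
    proof (intro AE_I2)
      fix x :: real
      show "norm (x ^ j * K x) \<le> norm (indicator {0..} x *\<^sub>R (W x * K x))"
      proof (cases "x < 0")
        case True then show ?thesis by (simp add: K_neg)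
      next
        case False
        then have x0: "0 \<le> x" by simp
        have "x ^ j \<le> W x"
        proof (cases "x \<le> 1")
          case True
          then have "x ^ j \<le> 1" using x0 by (simp add: power_le_one)
          then show ?thesis using W_ge1[of x] by linarith
        next
          case False
          then have "x ^ j \<le> x ^ 2" using j by (intro power_increasing) auto
          also have "\<dots> = x powr 2" using False by (simp add: powr_realpow)
          also have "\<dots> \<le> x powr (2 + \<epsilon>)" using False eps by (intro powr_mono) auto
          also have "\<dots> \<le> W x" using x0 by (simp add: W_def)
          finally show ?thesis .
        qed
        then have "x ^ j * K x \<le> W x * K x" using K_nonneg by (intro mult_right_mono) auto
        then show ?thesis using x0 K_nonneg[of x] W_ge1[of x] by (simp add: abs_mult)
      qed
    qed
  qed
qed

lemma K_near0: "\<exists>\<delta>>0. \<forall>x. 0 \<le> x \<longrightarrow> x \<le> \<delta> \<longrightarrow> 2 \<le> K x"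
proof -
  interpret prob_space F by (rule F_prob)
  define A where "A n = {1 / real (Suc n)<..}" for n
  have "range A \<subseteq> sets F" by (auto simp: A_def F_sets)
  moreover have "incseq A" unfolding incseq_def A_def
  proof (intro allI impI subsetI)
    fix m n :: nat and x :: real assume mn: "m \<le> n" and x: "x \<in> {1/real(Suc m)<..}"
    have "1/real(Suc n) \<le> 1/real(Suc m)" using mn by (simp add: frac_le)
    then show "x \<in> {1/real (Suc n)<..}" using x by simp
  qed
  ultimately have lim: "(\<lambda>n. measure F (A n)) \<longlonglongrightarrow> measure F (\<Union>n. A n)"
    by (rule finite_Lim_measure_incseq)
  have U: "(\<Union>n. A n) = {0<..}"
  proof (intro equalityI subsetI)
    fix x :: real assume "x \<in> (\<Union>n. A n)"
    then obtain n where "1 / real (Suc n) < x" by (auto simp: A_def)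
    moreover have "0 < 1 / real (Suc n)" by simp
    ultimately have "0 < x" by linarith
    then show "x \<in> {0<..}" by simp
  next
    fix x :: real assume "x \<in> {0<..}"
    then obtain n where "inverse (real (Suc n)) < x" using reals_Archimedean by auto
    then show "x \<in> (\<Union>n. A n)" by (auto simp: A_def divide_inverse)
  qed
  have sp: "space F = UNIV" using sets_eq_imp_space_eq[OF F_sets] by simp
  have "measure F {0<..} = 1"
  proof -
    have "measure F ({..0} \<union> {0<..}) = measure F {..0} + measure F {0<..}"
      by (rule finite_measure_Union) (auto simp: F_sets)
    moreover have "{..0} \<union> {0<..} = space F" using sp by auto
    ultimately show ?thesis using F_pos prob_space by simp
  qed
  with lim U have lim': "(\<lambda>n. measure F (A n)) \<longlonglongrightarrow> 1" by simp
  have "2 / \<alpha> < 1" using alpha by simp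
  from order_tendstoD(1)[OF lim' this] obtain n where n: "2 / \<alpha> < measure F (A n)"
    by (auto simp: eventually_sequentially)
  show ?thesis
  proof (intro exI[of _ "1 / real (Suc n)"] conjI allI impI)
    show "0 < 1 / real (Suc n)" by simp
    fix x :: real assume x: "0 \<le> x" "x \<le> 1 / real (Suc n)"
    have "measure F (A n) \<le> measure F {x<..}"
    proof (rule finite_measure_mono)
      show "A n \<subseteq> {x<..}" using x by (auto simp: A_def)
      show "{x<..} \<in> sets F" by (simp add: F_sets)
    qed
    then have "2 / \<alpha> < measure F {x<..}" using n by simp
    then have "2 < measure F {x<..} * \<alpha>" using alpha by (simp add: pos_divide_less_eq)
    then show "2 \<le> K x" using x by (simp add: tailk_def mult.commute)
  qed
qed

end


context LL begin

lemma Kx_div_nonpos: "x \<le> 0 \<Longrightarrow> K x / x = 0"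
  by (cases "x = 0") (auto simp: K_neg)

lemma K_div_nonneg: "0 \<le> K x / x"
  using K_nonneg[of x] by (cases "x \<le> 0") (auto simp: Kx_div_nonpos)

lemma K_int: "integrable lborel K"
  using K_int_pow[of 0] by simp

lemma psi_int: "integrable lborel (\<lambda>x. (iexp (t*x) - 1) * of_real (K x / x))"
proof (rule Bochner_Integration.integrable_bound[of _ "\<lambda>x. (\<bar>t\<bar> + 2) * K x"])
  show "integrable lborel (\<lambda>x. (\<bar>t\<bar> + 2) * K x)" using K_int by simp
  show "(\<lambda>x. (iexp (t*x) - 1) * of_real (K x / x)) \<in> borel_measurable lborel"
    using K_meas by measurable
  show "AE x in lborel. norm ((iexp (t*x) - 1) * of_real (K x / x)) \<le> norm ((\<bar>t\<bar> + 2) * K x)"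
  proof (intro AE_I2)
    fix x :: real
    have Kn: "0 \<le> K x" by (rule K_nonneg)
    have "norm ((iexp (t*x) - 1) * of_real (K x / x)) \<le> (\<bar>t\<bar> + 2) * K x"
    proof (cases "x \<le> 0")
      case True then show ?thesis using Kn by (simp add: Kx_div_nonpos)
    next
      case False
      then have x: "0 < x" by simp
      have e: "norm ((iexp (t*x) - 1) * of_real (K x / x)) = cmod (iexp (t*x) - 1) * (K x / x)"
        using x Kn by (simp add: norm_mult del: of_real_divide)
      show ?thesis
      proof (cases "x \<le> 1")
        case True
        have "cmod (iexp (t*x) - 1) \<le> \<bar>t\<bar> * x"
          using iexp_diff_bound[of "t*x" 0] x by (simp add: abs_mult)
        then have "cmod (iexp (t*x) - 1) * (K x / x) \<le> \<bar>t\<bar> * x * (K x / x)"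
          using K_div_nonneg[of x] by (intro mult_right_mono) auto
        also have "\<dots> = \<bar>t\<bar> * K x" using x by simp
        also have "\<dots> \<le> (\<bar>t\<bar> + 2) * K x" using Kn by (intro mult_right_mono) auto
        finally show ?thesis using e by simp
      next
        case False
        have "cmod (iexp (t*x) - 1) \<le> cmod (iexp (t*x)) + cmod (1::complex)"
          by (rule norm_triangle_ineq4)
        then have c2: "cmod (iexp (t*x) - 1) \<le> 2" by simp
        have "K x \<le> K x * x" using False Kn by (simp add: mult_le_cancel_left1)
        then have "K x / x \<le> K x" using x by (simp add: divide_le_eq)
        then have "cmod (iexp (t*x) - 1) * (K x / x) \<le> 2 * K x"
          using c2 K_div_nonneg[of x] Kn by (intro mult_mono) auto
        also have "\<dots> \<le> (\<bar>t\<bar> + 2) * K x" using Kn by (intro mult_right_mono) auto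
        finally show ?thesis using e by simp
      qed
    qed
    then show "norm ((iexp (t*x) - 1) * of_real (K x / x)) \<le> norm ((\<bar>t\<bar> + 2) * K x)"
      using Kn by simp
  qed
qed

definition psi where "psi t = (\<integral>x. (iexp (t*x) - 1) * of_real (K x / x) \<partial>lborel)"
definition D where "D j t = (\<integral>x. iexp (t*x) * of_real (x^j * K x) \<partial>lborel)" for j :: nat

lemma phipi_eq: "phipi \<alpha> F t = exp (psi t)"
proof -
  have "set_lebesgue_integral lborel {0<..} (\<lambda>x. (iexp (t * x) - 1) * complex_of_real (K x / x)) = psi t"
    unfolding set_lebesgue_integral_def psi_def
    by (intro Bochner_Integration.integral_cong refl) (auto simp: indicator_def Kx_div_nonpos simp del: of_real_divide)
  then show ?thesis by (simp add: phipi_def)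
qed

lemma psi_deriv: "(psi has_vector_derivative \<i> * D 0 t) (at t)"
proof -
  have wm: "(\<lambda>x. K x / x) \<in> borel_measurable borel" using K_meas by measurable
  have int1: "integrable lborel (\<lambda>x. x * (K x / x))"
  proof (rule Bochner_Integration.integrable_bound[OF K_int])
    show "(\<lambda>x. x * (K x / x)) \<in> borel_measurable lborel" using wm by measurable
    show "AE x in lborel. norm (x * (K x / x)) \<le> norm (K x)"
      by (intro AE_I2) (auto simp: K_nonneg)
  qed
  have d: "(psi has_vector_derivative (\<integral>x. \<i> * iexp (t*x) * of_real (x * (K x / x)) \<partial>lborel)) (at t)"
    unfolding psi_def[abs_def] by (rule deriv_iexp_int[OF wm psi_int int1])
  have "(\<integral>x. \<i> * iexp (t*x) * of_real (x * (K x / x)) \<partial>lborel) = (\<integral>x. \<i> * (iexp (t*x) * of_real (x^0 * K x)) \<partial>lborel)"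
  proof (rule integral_cong_AE)
    show "(\<lambda>x. \<i> * iexp (t*x) * of_real (x * (K x / x))) \<in> borel_measurable lborel" using wm by measurable
    show "(\<lambda>x. \<i> * (iexp (t*x) * of_real (x^0 * K x))) \<in> borel_measurable lborel" using K_meas by measurable
    show "AE x in lborel. \<i> * iexp (t*x) * of_real (x * (K x / x)) = \<i> * (iexp (t*x) * of_real (x^0 * K x))"
      using AE_lborel_singleton[of 0] by eventually_elim simp
  qed
  also have "\<dots> = \<i> * D 0 t" unfolding D_def by (rule integral_mult_right_zero)
  finally show ?thesis using d by simp
qed

lemma cK_int: "j \<le> 2 \<Longrightarrow> integrable lborel (\<lambda>x. complex_of_real (x^j * K x))"
  by (subst complex_of_real_integrable_eq) (rule K_int_pow)

lemma D_int: "j \<le> 2 \<Longrightarrow> integrable lborel (\<lambda>x. iexp (t*x) * of_real (x^j * K x))"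
  by (rule int_iexp_mult[OF cK_int]) auto

lemma D_deriv: "j < 2 \<Longrightarrow> (D j has_vector_derivative \<i> * D (Suc j) t) (at t)"
proof -
  assume j: "j < 2"
  have wm: "(\<lambda>x. x^j * K x) \<in> borel_measurable borel" using K_meas by measurable
  have int: "integrable lborel (\<lambda>x. (iexp (s*x) - 0) * of_real (x^j * K x))" for s
    unfolding diff_zero using j by (intro D_int) simp
  have int1: "integrable lborel (\<lambda>x. x * (x^j * K x))"
    using K_int_pow[of "Suc j"] j by (simp add: mult.assoc)
  have d: "((\<lambda>s. \<integral>x. (iexp (s*x) - 0) * of_real (x^j * K x) \<partial>lborel) has_vector_derivative
          (\<integral>x. \<i> * iexp (t*x) * of_real (x * (x^j * K x)) \<partial>lborel)) (at t)"
    by (rule deriv_iexp_int[OF wm int int1])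
  have "(\<integral>x. \<i> * iexp (t*x) * of_real (x * (x^j * K x)) \<partial>lborel) = (\<integral>x. \<i> * (iexp (t*x) * of_real (x^Suc j * K x)) \<partial>lborel)"
    by (intro Bochner_Integration.integral_cong refl) (simp add: mult.assoc)
  also have "\<dots> = \<i> * D (Suc j) t" unfolding D_def by (rule integral_mult_right_zero)
  finally have e: "(\<integral>x. \<i> * iexp (t*x) * of_real (x * (x^j * K x)) \<partial>lborel) = \<i> * D (Suc j) t" .
  have "(\<lambda>s. \<integral>x. (iexp (s*x) - 0) * of_real (x^j * K x) \<partial>lborel) = D j"
    unfolding diff_zero D_def[abs_def] ..
  with d e show ?thesis by simp
qed

definition m where "m j = (\<integral>x. \<bar>x^j * K x\<bar> \<partial>lborel)" for j :: nat

lemma m_nonneg: "0 \<le> m j" by (simp add: m_def)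

lemma D_bound: "norm (D j t) \<le> m j"
  unfolding D_def m_def
  by (rule order.trans[OF integral_norm_bound]) (simp add: norm_mult norm_of_real del: of_real_mult of_real_power)

lemma D_cont: "j \<le> 2 \<Longrightarrow> continuous_on UNIV (D j)"
proof -
  assume j: "j \<le> 2"
  have "continuous_on UNIV (\<lambda>t. \<integral>x. iexp (t*x) * of_real (x^j * K x) \<partial>lborel)"
    by (rule cont_kernel_int[OF cK_int[OF j]]) (auto intro!: continuous_intros)
  then show ?thesis unfolding D_def[abs_def] .
qed

end


lemma cos_abs_mult: "cos (\<bar>t\<bar> * x) = cos (t * x :: real)"
  by (cases "0 \<le> t") auto

lemma G_deriv:
  fixes T x :: real
  assumes T: "0 < T" and x: "0 < x"
  shows "((\<lambda>x. ln x - sin (T*x) / (T*x) + 1 / (T*x)) has_real_derivative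
           ((1 - cos (T*x)) / x + (sin (T*x) - 1) / (T * x^2))) (at x)"
proof -
  have "((\<lambda>x. ln x - sin (T*x) / (T*x) + 1 / (T*x)) has_real_derivative
     (1 / x - ((cos (T*x) * T) * (T*x) - sin (T*x) * T) / (T*x)^2 + (- T / (T*x)^2))) (at x)"
    using T x by (auto intro!: derivative_eq_intros simp: power2_eq_square)
  moreover have "1 / x - ((cos (T*x) * T) * (T*x) - sin (T*x) * T) / (T*x)^2 + (- T / (T*x)^2)
      = (1 - cos (T*x)) / x + (sin (T*x) - 1) / (T * x^2)"
    using T x by (simp add: field_simps power2_eq_square)
  ultimately show ?thesis by simp
qed

context LL begin

lemma psi_Re: "Re (psi t) = (\<integral>x. (cos (t*x) - 1) * (K x / x) \<partial>lborel)"
proof -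
  have "Re (psi t) = (\<integral>x. Re ((iexp (t*x) - 1) * of_real (K x / x)) \<partial>lborel)"
    unfolding psi_def by (rule integral_bounded_linear[OF bounded_linear_Re psi_int, symmetric])
  also have "\<dots> = (\<integral>x. (cos (t*x) - 1) * (K x / x) \<partial>lborel)"
    by (intro Bochner_Integration.integral_cong refl) (simp add: Re_exp del: of_real_divide)
  finally show ?thesis .
qed

lemma psi_Re_int: "integrable lborel (\<lambda>x. (cos (t*x) - 1) * (K x / x))"
proof -
  have "integrable lborel (\<lambda>x. Re ((iexp (t*x) - 1) * of_real (K x / x)))"
    by (rule integrable_Re[OF psi_int])
  then show ?thesis by (simp add: Re_exp del: of_real_divide)
qed

lemma psi_Re_nonpos: "Re (psi t) \<le> 0"
proof -
  have "0 \<le> (\<integral>x. - ((cos (t*x) - 1) * (K x / x)) \<partial>lborel)"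
  proof (intro integral_nonneg_AE AE_I2)
    fix x
    have "(cos (t*x) - 1) * (K x / x) \<le> 0"
      by (rule mult_nonpos_nonneg) (use K_div_nonneg cos_le_one in auto)
    then show "0 \<le> - ((cos (t*x) - 1) * (K x / x))" by linarith
  qed
  then show ?thesis by (simp add: psi_Re)
qed

lemma psi_Re_decay:
  obtains \<delta> where "\<delta> > 0" "\<And>t. 1 \<le> \<bar>t\<bar> * \<delta> \<Longrightarrow> Re (psi t) \<le> 2 - 2 * ln (\<bar>t\<bar> * \<delta>)"
proof -
  obtain \<delta> where \<delta>: "\<delta> > 0" "\<And>x. 0 \<le> x \<Longrightarrow> x \<le> \<delta> \<Longrightarrow> 2 \<le> K x"
    using K_near0 by blast
  have R: "Re (psi t) \<le> 2 - 2 * ln (\<bar>t\<bar> * \<delta>)" if Td: "1 \<le> \<bar>t\<bar> * \<delta>" for t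
  proof -
    define T where "T = \<bar>t\<bar>"
    have T: "0 < T" using Td \<delta>(1) T_def by (cases "t = 0") auto
    have Td': "1 \<le> T * \<delta>" using Td T_def by simp
    define G where "G x = ln x - sin (T*x) / (T*x) + 1 / (T*x)" for x
    define G' where "G' x = (1 - cos (T*x)) / x + (sin (T*x) - 1) / (T * x^2)" for x
    have a: "1 / T \<le> \<delta>" using Td' T by (simp add: divide_le_eq mult.commute)
    have ftc: "(\<integral>x. indicator {1/T..\<delta>} x *\<^sub>R G' x \<partial>lborel) = G \<delta> - G (1/T)"
    proof (rule integral_FTC_atLeastAtMost[OF a])
      fix x assume x: "1/T \<le> x" "x \<le> \<delta>"
      then have x0: "0 < x" using T by (meson less_le_trans zero_less_divide_1_iff)
      show "(G has_vector_derivative G' x) (at x within {1/T..\<delta>})"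
        unfolding G_def G'_def
        using G_deriv[OF T x0] by (simp add: has_real_derivative_iff_has_vector_derivative has_vector_derivative_at_within)
    next
      have "\<forall>x\<in>{1/T..\<delta>}. x \<noteq> 0" using T by (auto simp: field_simps)
      then show "continuous_on {1/T..\<delta>} G'"
        unfolding G'_def using T by (intro continuous_intros) auto
    qed
    have intG': "integrable lborel (\<lambda>x. indicator {1/T..\<delta>} x * (2 * G' x))"
    proof -
      have "integrable lborel (\<lambda>x. (2 * G' x) * indicator {1/T..\<delta>} x)"
      proof (rule borel_integrable_atLeastAtMost)
        fix x assume x: "1/T \<le> x" "x \<le> \<delta>"
        then have x0: "0 < x" using T by (meson less_le_trans zero_less_divide_1_iff)
        then show "isCont (\<lambda>x. 2 * G' x) x"
          unfolding G'_def using T by (intro continuous_intros) auto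
      qed
      then show ?thesis by (simp add: mult.commute)
    qed
    have cmp: "(\<integral>x. indicator {1/T..\<delta>} x * (2 * G' x) \<partial>lborel) \<le> (\<integral>x. - ((cos (t*x) - 1) * (K x / x)) \<partial>lborel)"
    proof (rule integral_mono[OF intG'])
      show "integrable lborel (\<lambda>x. - ((cos (t*x) - 1) * (K x / x)))"
        using psi_Re_int by simp
      fix x :: real
      have c: "cos (t*x) = cos (T*x)" unfolding T_def by (rule cos_abs_mult[symmetric])
      show "indicator {1/T..\<delta>} x * (2 * G' x) \<le> - ((cos (t*x) - 1) * (K x / x))"
      proof (cases "x \<in> {1/T..\<delta>}")
        case False
        then have "indicator {1/T..\<delta>} x * (2 * G' x) = 0" by simp
        also have "0 \<le> - ((cos (t*x) - 1) * (K x / x))"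
        proof -
          have "(cos (t*x) - 1) * (K x / x) \<le> 0"
            by (rule mult_nonpos_nonneg) (use K_div_nonneg cos_le_one in auto)
          then show ?thesis by linarith
        qed
        finally show ?thesis .
      next
        case True
        then have x0: "0 < x" using T by (meson atLeastAtMost_iff less_le_trans zero_less_divide_1_iff)
        have K2: "2 \<le> K x" using True x0 \<delta>(2)[of x] by auto
        have s: "(sin (T*x) - 1) / (T * x^2) \<le> 0"
          using sin_le_one[of "T*x"] T x0 by (intro divide_nonpos_pos) auto
        have "G' x \<le> (1 - cos (T*x)) / x" unfolding G'_def using s by linarith
        then have "2 * G' x \<le> 2 * ((1 - cos (T*x)) / x)" by linarith
        also have "\<dots> = (1 - cos (T*x)) * 2 / x" by simp
        also have "\<dots> \<le> (1 - cos (T*x)) * K x / x"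
          using K2 x0 cos_le_one[of "T*x"] by (intro divide_right_mono mult_left_mono) auto
        also have "\<dots> = - ((cos (t*x) - 1) * (K x / x))" unfolding c by (simp add: algebra_simps minus_divide_left diff_divide_distrib)
        finally show ?thesis using True by simp
      qed
    qed
    have "(\<integral>x. indicator {1/T..\<delta>} x * (2 * G' x) \<partial>lborel) = (\<integral>x. 2 * (indicator {1/T..\<delta>} x * G' x) \<partial>lborel)"
      by (simp add: mult.left_commute)
    also have "\<dots> = 2 * (\<integral>x. indicator {1/T..\<delta>} x * G' x \<partial>lborel)"
      by (rule integral_mult_right_zero)
    also have "\<dots> = 2 * (G \<delta> - G (1/T))" using ftc by simp
    finally have "(\<integral>x. indicator {1/T..\<delta>} x * (2 * G' x) \<partial>lborel) = 2 * (G \<delta> - G (1/T))" .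
    moreover have "(\<integral>x. - ((cos (t*x) - 1) * (K x / x)) \<partial>lborel) = - Re (psi t)"
      by (simp add: psi_Re)
    ultimately have R: "Re (psi t) \<le> - 2 * (G \<delta> - G (1/T))" using cmp by simp
    have "G \<delta> - G (1/T) = ln (T * \<delta>) + (1 - sin (T*\<delta>)) / (T*\<delta>) + sin 1 - 1"
      using T \<delta>(1) by (simp add: G_def ln_mult ln_div field_simps)
    moreover have "0 \<le> (1 - sin (T*\<delta>)) / (T*\<delta>)"
      using sin_le_one[of "T*\<delta>"] T \<delta>(1) by simp
    moreover have "0 \<le> sin (1::real)" using sin_gt_zero[of 1] pi_gt3 by (simp add: less_imp_le)
    ultimately have "ln (T * \<delta>) - 1 \<le> G \<delta> - G (1/T)" by linarith
    then show ?thesis using R T_def by simp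
  qed
  show ?thesis using that[OF \<delta>(1) R] .
qed

lemma P0_bound: "\<exists>C. \<forall>t. norm (exp (psi t)) \<le> C / (1 + t^2)"
proof -
  obtain \<delta> where \<delta>: "\<delta> > 0" "\<And>t. 1 \<le> \<bar>t\<bar> * \<delta> \<Longrightarrow> Re (psi t) \<le> 2 - 2 * ln (\<bar>t\<bar> * \<delta>)"
    using psi_Re_decay by blast
  define C where "C = exp 2 * (1 + \<delta>^2) / \<delta>^2 + (1 + 1 / \<delta>^2)"
  have "norm (exp (psi t)) \<le> C / (1 + t^2)" for t
  proof (cases "1 \<le> \<bar>t\<bar> * \<delta>")
    case True
    have t0: "0 < \<bar>t\<bar>" using True \<delta>(1) by (cases "t = 0") auto
    have "norm (exp (psi t)) = exp (Re (psi t))" by (simp add: norm_exp_eq_Re)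
    also have "\<dots> \<le> exp (2 - 2 * ln (\<bar>t\<bar> * \<delta>))" using \<delta>(2)[OF True] by simp
    also have "\<dots> = exp 2 / (\<bar>t\<bar> * \<delta>)^2"
    proof -
      have u0: "0 < \<bar>t\<bar> * \<delta>" using t0 \<delta>(1) by simp
      have e1: "exp (2 * ln (\<bar>t\<bar> * \<delta>)) = (\<bar>t\<bar> * \<delta>)^2"
        using u0 by (simp only: mult_2 exp_add exp_ln power2_eq_square)
      show ?thesis by (simp only: exp_diff e1)
    qed
    also have "\<dots> = exp 2 / (t^2 * \<delta>^2)" by (simp add: power_mult_distrib)
    also have "\<dots> \<le> exp 2 * (1 + \<delta>^2) / \<delta>^2 / (1 + t^2)"
    proof -
      have "1 \<le> t^2 * \<delta>^2"
        using True \<delta>(1) by (metis abs_ge_zero abs_mult abs_power2 one_le_power power_mult_distrib power2_abs zero_le_mult_iff)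
      then have h: "1 + t^2 \<le> t^2 * (1 + \<delta>^2)" by (simp add: algebra_simps)
      have t2: "0 < t^2" using t0 by simp
      have d2: "0 < \<delta>^2" using \<delta>(1) by simp
      have A: "exp 2 / (t^2 * \<delta>^2) * (1 + t^2) = exp 2 * ((1 + t^2) / (t^2 * \<delta>^2))" by simp
      have B: "(1 + t^2) / (t^2 * \<delta>^2) \<le> (t^2 * (1 + \<delta>^2)) / (t^2 * \<delta>^2)"
        by (rule divide_right_mono[OF h]) (use t2 d2 in simp)
      have C: "(t^2 * (1 + \<delta>^2)) / (t^2 * \<delta>^2) = (1 + \<delta>^2) / \<delta>^2" using t2 by simp
      have "exp 2 / (t^2 * \<delta>^2) * (1 + t^2) \<le> exp 2 * ((1 + \<delta>^2) / \<delta>^2)"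
        unfolding A using B C by (intro mult_left_mono) auto
      then have "exp 2 / (t^2 * \<delta>^2) * (1 + t^2) \<le> exp 2 * (1 + \<delta>^2) / \<delta>^2" by simp
      moreover have pos: "0 < 1 + t^2" by (simp add: add_pos_nonneg)
      ultimately show ?thesis by (simp only: pos_le_divide_eq[OF pos])
    qed
    also have "\<dots> \<le> C / (1 + t^2)"
      unfolding C_def by (intro divide_right_mono) (auto simp: add_pos_pos)
    finally show ?thesis .
  next
    case False
    have "norm (exp (psi t)) = exp (Re (psi t))" by (simp add: norm_exp_eq_Re)
    also have "\<dots> \<le> 1" using psi_Re_nonpos[of t] by simp
    also have "\<dots> \<le> (1 + 1 / \<delta>^2) / (1 + t^2)"
    proof -
      have "\<bar>t\<bar> \<le> 1 / \<delta>" using False \<delta>(1) by (simp add: field_simps)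
      then have "t^2 \<le> (1/\<delta>)^2" by (metis abs_ge_zero power2_abs power_mono)
      then have "1 + t^2 \<le> 1 + 1 / \<delta>^2" by (simp add: power_divide)
      moreover have pos: "0 < 1 + t^2" by (simp add: add_pos_nonneg)
      ultimately show ?thesis by (simp add: pos_le_divide_eq[OF pos])
    qed
    also have "\<dots> \<le> C / (1 + t^2)"
      unfolding C_def by (intro divide_right_mono) (auto simp: \<delta>(1))
    finally show ?thesis .
  qed
  then show ?thesis by blast
qed

end


context LL begin

definition "P0 t = exp (psi t)"
definition "P1 t = \<i> * D 0 t * P0 t"
definition "P2 t = \<i> * D 0 t * P1 t + \<i> * (\<i> * D 1 t) * P0 t"
definition "P3 t = (\<i> * D 0 t * P2 t + \<i> * (\<i> * D 1 t) * P1 t) + (\<i> * (\<i> * D 1 t) * P1 t + \<i> * (\<i> * (\<i> * D 2 t)) * P0 t)"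

lemma P0_deriv: "(P0 has_vector_derivative P1 t) (at t)"
proof -
  have "((exp \<circ> psi) has_vector_derivative (\<i> * D 0 t * exp (psi t))) (at t)"
    by (rule field_vector_diff_chain_at[OF psi_deriv DERIV_exp])
  then show ?thesis by (simp add: P0_def[abs_def] P1_def o_def)
qed

lemma iD_deriv: "j < 2 \<Longrightarrow> ((\<lambda>t. \<i> * D j t) has_vector_derivative \<i> * (\<i> * D (Suc j) t)) (at t)"
  by (rule has_vector_derivative_mult_right[OF D_deriv])

lemma P1_deriv: "(P1 has_vector_derivative P2 t) (at t)"
proof -
  have "((\<lambda>t. \<i> * D 0 t * P0 t) has_vector_derivative (\<i> * D 0 t * P1 t + \<i> * (\<i> * D (Suc 0) t) * P0 t)) (at t)"
    by (rule has_vector_derivative_mult[OF iD_deriv P0_deriv]) simp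
  then show ?thesis by (simp add: P1_def[abs_def] P2_def)
qed

lemma P2_deriv: "(P2 has_vector_derivative P3 t) (at t)"
proof -
  have a: "((\<lambda>t. \<i> * D 0 t * P1 t) has_vector_derivative (\<i> * D 0 t * P2 t + \<i> * (\<i> * D (Suc 0) t) * P1 t)) (at t)"
    by (rule has_vector_derivative_mult[OF iD_deriv P1_deriv]) simp
  have b0: "((\<lambda>t. \<i> * (\<i> * D 1 t)) has_vector_derivative \<i> * (\<i> * (\<i> * D (Suc 1) t))) (at t)"
    by (rule has_vector_derivative_mult_right[OF iD_deriv]) simp
  have b: "((\<lambda>t. \<i> * (\<i> * D 1 t) * P0 t) has_vector_derivative (\<i> * (\<i> * D 1 t) * P1 t + \<i> * (\<i> * (\<i> * D (Suc 1) t)) * P0 t)) (at t)"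
    by (rule has_vector_derivative_mult[OF b0 P0_deriv])
  have "((\<lambda>t. \<i> * D 0 t * P1 t + \<i> * (\<i> * D 1 t) * P0 t) has_vector_derivative
     ((\<i> * D 0 t * P2 t + \<i> * (\<i> * D (Suc 0) t) * P1 t) + (\<i> * (\<i> * D 1 t) * P1 t + \<i> * (\<i> * (\<i> * D (Suc 1) t)) * P0 t))) (at t)"
    by (rule has_vector_derivative_add[OF a b])
  then show ?thesis by (simp add: P2_def[abs_def] P3_def numeral_2_eq_2)
qed

lemma P0_cont: "continuous_on UNIV P0"
  using P0_deriv by (auto intro!: continuous_at_imp_continuous_on has_vector_derivative_continuous)
lemma P1_cont: "continuous_on UNIV P1"
  using P1_deriv by (auto intro!: continuous_at_imp_continuous_on has_vector_derivative_continuous)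
lemma P2_cont: "continuous_on UNIV P2"
  using P2_deriv by (auto intro!: continuous_at_imp_continuous_on has_vector_derivative_continuous)
lemma P3_cont: "continuous_on UNIV P3"
  unfolding P3_def[abs_def]
  by (intro continuous_intros P0_cont P1_cont P2_cont D_cont) auto

definition "c1 = m 0"
definition "c2 = m 0 * c1 + m 1"
definition "c3 = m 0 * c2 + 2 * (m 1 * c1) + m 2"

lemma c_nonneg: "0 \<le> c1" "0 \<le> c2" "0 \<le> c3"
  using m_nonneg[of 0] m_nonneg[of 1] m_nonneg[of 2] by (auto simp: c1_def c2_def c3_def)

lemma nDi: "norm (\<i> * D j t) \<le> m j"
  using D_bound[of j t] by (simp add: norm_mult)

lemma nDii: "norm (\<i> * (\<i> * D j t)) \<le> m j"
  using D_bound[of j t] by (simp add: norm_mult)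

lemma nDiii: "norm (\<i> * (\<i> * (\<i> * D j t))) \<le> m j"
  using D_bound[of j t] by (simp add: norm_mult)

lemma nprod: "norm a \<le> A \<Longrightarrow> norm b \<le> B \<Longrightarrow> norm (a * b) \<le> A * (B::real)"
  for a b :: complex
  by (simp add: norm_mult mult_mono')

lemma P1_bound: "norm (P1 t) \<le> c1 * norm (P0 t)"
  unfolding P1_def c1_def by (rule nprod[OF nDi order.refl])

lemma P2_bound: "norm (P2 t) \<le> c2 * norm (P0 t)"
proof -
  have "norm (P2 t) \<le> norm (\<i> * D 0 t * P1 t) + norm (\<i> * (\<i> * D 1 t) * P0 t)"
    unfolding P2_def by (rule norm_triangle_ineq)
  also have "\<dots> \<le> m 0 * (c1 * norm (P0 t)) + m 1 * norm (P0 t)"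
    by (intro add_mono nprod nDi nDii P1_bound order.refl)
  also have "\<dots> = c2 * norm (P0 t)" by (simp add: c2_def algebra_simps)
  finally show ?thesis .
qed

lemma P3_bound: "norm (P3 t) \<le> c3 * norm (P0 t)"
proof -
  have "norm (P3 t) \<le> (norm (\<i> * D 0 t * P2 t) + norm (\<i> * (\<i> * D 1 t) * P1 t)) + (norm (\<i> * (\<i> * D 1 t) * P1 t) + norm (\<i> * (\<i> * (\<i> * D 2 t)) * P0 t))"
    unfolding P3_def by (intro order.trans[OF norm_triangle_ineq] add_mono norm_triangle_ineq)
  also have "\<dots> \<le> (m 0 * (c2 * norm (P0 t)) + m 1 * (c1 * norm (P0 t))) + (m 1 * (c1 * norm (P0 t)) + m 2 * norm (P0 t))"
    by (intro add_mono nprod nDi nDii nDiii P1_bound P2_bound order.refl)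
  also have "\<dots> = c3 * norm (P0 t)" by (simp add: c3_def algebra_simps)
  finally show ?thesis .
qed

end

theorem lemmaL0:
  fixes \<alpha> lam \<epsilon> :: real and F \<pi> :: "real measure"
  assumes lam: "lam > 0"
    and F_prob: "prob_space F" and F_sets: "sets F = sets borel"
    and F_pos: "measure F {..0} = 0"
    and pi_prob: "prob_space \<pi>" and pi_sets: "sets \<pi> = sets borel"
    and pi_char: "\<And>t. char \<pi> t = phipi \<alpha> F t"
    and cond_i_eps: "\<epsilon> > 0"
    and cond_i: "set_integrable lborel {0..}
                   (\<lambda>x. max 1 (\<bar>x\<bar> powr (2 + \<epsilon>)) * tailk \<alpha> F x)"
    and cond_ii: "tailk \<alpha> F 0 = \<alpha>" "2 < \<alpha>"
    and cond_iv: "\<exists>C. \<forall>u.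
        norm (phik \<alpha> F u) \<le> C * (1 + \<bar>u\<bar>) powr (-1) \<and>
        norm (vector_derivative (phik \<alpha> F) (at u)) \<le> C * (1 + \<bar>u\<bar>) powr (-2) \<and>
        norm (vector_derivative (\<lambda>v. vector_derivative (phik \<alpha> F) (at v)) (at u))
          \<le> C * (1 + \<bar>u\<bar>) powr (-2)"
  shows "\<exists>f. f \<in> borel_measurable borel \<and> (\<forall>x. 0 \<le> f x) \<and>
           \<pi> = density lborel (\<lambda>x. ennreal (f x)) \<and>
           bounded (range f) \<and>
           bounded (range (\<lambda>x. x ^ 3 * f x)) \<and>
           bounded (range (\<lambda>x. x ^ 2 * f x))"
proof -
  interpret LL \<alpha> \<epsilon> F
    by (rule LL.intro[OF F_prob F_sets F_pos cond_i_eps cond_i cond_ii(2)])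
  have rd: "real_distribution \<pi>"
    using pi_prob pi_sets by (simp add: real_distribution_def real_distribution_axioms_def)
  have chP: "char \<pi> = P0"
    using pi_char by (auto simp: phipi_eq P0_def)
  obtain C where C: "\<And>t. norm (P0 t) \<le> C / (1 + t^2)"
    using P0_bound unfolding P0_def by blast
  have C0: "0 \<le> C" using C[of 0] norm_ge_zero[of "P0 0"] by (simp del: norm_ge_zero)
  have P0m: "P0 \<in> borel_measurable borel" using P0_cont by (rule borel_measurable_continuous_onI)
  have intP0: "integrable lborel (char \<pi>)"
    unfolding chP by (rule int_bound_sq[OF P0m C])
  define f where "f = (\<lambda>x. Re (\<integral>t. iexp (-(t*x)) * char \<pi> t \<partial>lborel) / (2*pi))"
  note FD = fourier_density[OF rd intP0, folded f_def]
  define B where "B = (1 + c1 + c2 + c3) * C"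
  have bnd: "norm (Pj t) \<le> B / (1 + t^2)" if "norm (Pj t) \<le> c * norm (P0 t)" "0 \<le> c" "c \<le> 1 + c1 + c2 + c3" for Pj c t
  proof -
    have "norm (Pj t) \<le> c * (C / (1 + t^2))"
      using that(1) mult_left_mono[OF C that(2)] by (rule order.trans)
    also have "\<dots> \<le> (1 + c1 + c2 + c3) * (C / (1 + t^2))"
      using that(3) C0 by (intro mult_right_mono) (auto simp: add_pos_nonneg)
    finally show ?thesis by (simp add: B_def)
  qed
  have b0: "norm (P0 t) \<le> B / (1 + t^2)" for t
  proof -
    have "norm (P0 t) \<le> 1 * norm (P0 t)" by simp
    from bnd[of P0 t 1, OF this] show ?thesis using c_nonneg by auto
  qed
  have b1: "norm (P1 t) \<le> B / (1 + t^2)" for t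
    by (rule bnd[of P1 t, OF P1_bound]) (use c_nonneg in auto)
  have b2: "norm (P2 t) \<le> B / (1 + t^2)" for t
    by (rule bnd[of P2 t, OF P2_bound]) (use c_nonneg in auto)
  have b3: "norm (P3 t) \<le> B / (1 + t^2)" for t
    by (rule bnd[of P3 t, OF P3_bound]) (use c_nonneg in auto)
  define E where "E j x = (\<integral>t. iexp (-(t*x)) * j t \<partial>lborel)" for j :: "real \<Rightarrow> complex" and x
  have e1: "E P1 x = \<i> * of_real x * E P0 x" for x
    unfolding E_def by (rule ibp_fourier[OF P0_deriv P1_cont b0 b1])
  have e2: "E P2 x = \<i> * of_real x * E P1 x" for x
    unfolding E_def by (rule ibp_fourier[OF P1_deriv P2_cont b1 b2])
  have e3: "E P3 x = \<i> * of_real x * E P2 x" for x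
    unfolding E_def by (rule ibp_fourier[OF P2_deriv P3_cont b2 b3])
  have e: "E P3 x = (\<i> * of_real x)^3 * E P0 x" for x
    using e1 e2 e3 by (simp add: power3_eq_cube mult.assoc)
  define N3 where "N3 = (\<integral>t. norm (P3 t) \<partial>lborel)"
  have nE3: "norm (E P3 x) \<le> N3" for x
    unfolding E_def N3_def
    by (rule order.trans[OF integral_norm_bound]) (simp add: norm_mult)
  have fE: "f x = Re (E P0 x) / (2*pi)" for x
    by (simp add: f_def E_def chP)
  define Bf where "Bf = (\<integral>t. norm (char \<pi> t) \<partial>lborel) / (2*pi)"
  have fb: "\<bar>f x\<bar> \<le> Bf" for x using FD(4) by (simp add: Bf_def f_def)
  have f3: "\<bar>x^3 * f x\<bar> \<le> N3 / (2*pi)" for x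
  proof -
    have "\<bar>x^3 * f x\<bar> = \<bar>x\<bar>^3 * \<bar>Re (E P0 x)\<bar> / (2*pi)"
      by (simp add: fE abs_mult power_abs)
    also have "\<dots> \<le> \<bar>x\<bar>^3 * norm (E P0 x) / (2*pi)"
      by (intro divide_right_mono mult_left_mono abs_Re_le_cmod) auto
    also have "\<bar>x\<bar>^3 * norm (E P0 x) = norm (E P3 x)"
      by (simp add: e norm_mult norm_power)
    also have "\<dots> / (2*pi) \<le> N3 / (2*pi)"
      using nE3[of x] by (intro divide_right_mono) auto
    finally show ?thesis .
  qed
  have f2: "\<bar>x^2 * f x\<bar> \<le> Bf + N3 / (2*pi)" for x
  proof (cases "\<bar>x\<bar> \<le> 1")
    case True
    have "\<bar>x^2 * f x\<bar> = x^2 * \<bar>f x\<bar>" by (simp add: abs_mult)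
    also have "\<dots> \<le> 1 * \<bar>f x\<bar>"
      using True by (intro mult_right_mono) (auto simp: abs_square_le_1)
    also have "\<dots> \<le> Bf + N3 / (2*pi)"
      using fb[of x] f3[of 0] by simp
    finally show ?thesis .
  next
    case False
    have "\<bar>x^2 * f x\<bar> = x^2 * \<bar>f x\<bar>" by (simp add: abs_mult)
    also have "\<dots> \<le> \<bar>x\<bar>^3 * \<bar>f x\<bar>"
    proof (intro mult_right_mono)
      have "\<bar>x\<bar>^2 \<le> \<bar>x\<bar>^3" using False by (intro power_increasing) auto
      then show "x^2 \<le> \<bar>x\<bar>^3" by simp
    qed simp
    also have "\<dots> = \<bar>x^3 * f x\<bar>" by (simp add: abs_mult power_abs)
    also have "\<dots> \<le> Bf + N3 / (2*pi)"
      using f3[of x] fb[of x] by (smt (verit) abs_ge_zero)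
    finally show ?thesis .
  qed
  show ?thesis
  proof (intro exI[of _ f] conjI)
    have "continuous_on UNIV f" using FD(3) unfolding f_def .
    then show "f \<in> borel_measurable borel" by (rule borel_measurable_continuous_onI)
    show "\<forall>x. 0 \<le> f x" using FD(2) unfolding f_def .
    show "\<pi> = density lborel (\<lambda>x. ennreal (f x))" using FD(1) unfolding f_def .
    show "bounded (range f)" unfolding bounded_iff using fb by auto
    show "bounded (range (\<lambda>x. x ^ 3 * f x))" unfolding bounded_iff using f3 by auto
    show "bounded (range (\<lambda>x. x ^ 2 * f x))" unfolding bounded_iff using f2 by auto
  qed
qed


end
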